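(* Let $Z\subseteq\mathbb{C}^g$ be a $\Lambda$-periodic analytic set, let $C\subseteq\mathbb{C}^g$ be an irreducible complex algebraic curve, and let $\tau\in\mathbb{C}^g$ with $C+\tau\subseteq Z$. Let $\phi$ be a linear branch of $C$, convergent for $|w|>R$, with direction $\alpha$. Let $K$ be a positive integer such that for every ball $B\subseteq\mathbb{C}^g$ of radius $1$ and all $w_0,w_1\in\mathbb{C}$, $\tau',\mu\in\mathbb{C}^g$, the condition $\#\big((\Gamma(\phi,\mu,w_0,w_1)+\tau')\cap Z\cap B\big)\ge K$ implies $\Gamma(\phi,\mu,w_0,w_1)+\tau'\subseteq Z$. Suppose $\lambda\in\Lambda$ satisfies $\|\beta-\lambda\|<(2K)^{-1}$ for some $\beta\in[\alpha]$. Then $C+\tau+[\lambda]\subseteq Z$.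
   Context: $\Lambda\subset\mathbb{C}^g$ is a lattice of rank $2g$; $Z$ is periodic if $Z+\Lambda=Z$; $Z$ is analytic if locally it is the common zero set of finitely many complex-analytic functions. $\|\cdot\|$ is the Euclidean norm on $\mathbb{C}^g$, and for $z\in\mathbb{C}^g\setminus\{0\}$, $[z]=\{wz:w\in\mathbb{C}\}$. A branch of an irreducible curve $C\subseteq\mathbb{C}^g$ is a choice of a coordinate index $i$ with $z_i$ non-constant on $C$ together with a $g$-tuple $\phi=(\phi_1(z_i),\dots,\phi_g(z_i))$ of algebraic Puiseux series in $z_i$, convergent for $|z_i|>R$, with $\phi(z_i)\in C$ for all $|z_i|>R$. The branch is linear if for every $j$, $\phi_j(z_i)=\alpha_jz_i+(\text{lower order terms})$ with $\alpha_j\in\mathbb{C}$; then $\alpha=(\alpha_1,\dots,\alpha_g)$ (which has $\alpha_i=1$) is its direction. For $w_0,w_1\in\mathbb{C}$, $\mu\in\mathbb{C}^g$, $\Gamma(\phi,\mu,w_0,w_1)$ is the Zariski closure in $\mathbb{C}^g$ of $\{(\phi_1(w_0+\kappa w_1)-\kappa\mu_1,\dots,\phi_g(w_0+\kappa w_1)-\kappa\mu_g): \kappa\in\mathbb{C},\ |w_0+\kappa w_1|>R\}$. *)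

theory Defs
  imports "HOL-Analysis.Analysis" "HOL-Computational_Algebra.Polynomial"
begin

definition is_lattice :: "(complex ^ 'g) set \<Rightarrow> bool" where
  "is_lattice L \<longleftrightarrow> (\<exists>V. independent V \<and> card V = 2 * CARD('g) \<and>
      L = {\<Sum>v\<in>V. real_of_int (n v) *\<^sub>R v | n. True})"

definition periodic_set :: "(complex ^ 'g) set \<Rightarrow> (complex ^ 'g) set \<Rightarrow> bool" where
  "periodic_set L Z \<longleftrightarrow> {z + l | z l. z \<in> Z \<and> l \<in> L} = Z"

text \<open>Holomorphic functions of several complex variables: complex-linear Frechet derivative.\<close>
definition holo_on :: "(complex ^ 'g) set \<Rightarrow> (complex ^ 'g \<Rightarrow> complex) \<Rightarrow> bool" where
  "holo_on U f \<longleftrightarrow> (\<forall>z\<in>U. \<exists>f'. (f has_derivative f') (at z) \<and>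
      (\<forall>c v. f' (c *s v) = c * f' v))"

definition analytic_set :: "(complex ^ 'g) set \<Rightarrow> bool" where
  "analytic_set Z \<longleftrightarrow> (\<forall>p. \<exists>U F. open U \<and> p \<in> U \<and> finite F \<and> (\<forall>f\<in>F. holo_on U f) \<and>
      Z \<inter> U = {z\<in>U. \<forall>f\<in>F. f z = 0})"

inductive_set poly_funs :: "(complex ^ 'g \<Rightarrow> complex) set" where
  pf_const: "(\<lambda>z. c) \<in> poly_funs"
| pf_coord: "(\<lambda>z. z $ i) \<in> poly_funs"
| pf_add: "p \<in> poly_funs \<Longrightarrow> q \<in> poly_funs \<Longrightarrow> (\<lambda>z. p z + q z) \<in> poly_funs"
| pf_mult: "p \<in> poly_funs \<Longrightarrow> q \<in> poly_funs \<Longrightarrow> (\<lambda>z. p z * q z) \<in> poly_funs"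

definition algebraic_set :: "(complex ^ 'g) set \<Rightarrow> bool" where
  "algebraic_set A \<longleftrightarrow> (\<exists>F. finite F \<and> F \<subseteq> poly_funs \<and> A = {z. \<forall>f\<in>F. f z = 0})"

definition zariski_closure :: "(complex ^ 'g) set \<Rightarrow> (complex ^ 'g) set" where
  "zariski_closure S = {z. \<forall>p\<in>poly_funs. (\<forall>s\<in>S. p s = 0) \<longrightarrow> p z = 0}"

definition irreducible_alg :: "(complex ^ 'g) set \<Rightarrow> bool" where
  "irreducible_alg A \<longleftrightarrow> A \<noteq> {} \<and> algebraic_set A \<and>
     \<not> (\<exists>A1 A2. algebraic_set A1 \<and> algebraic_set A2 \<and> A = A1 \<union> A2 \<and> A1 \<noteq> A \<and> A2 \<noteq> A)"

text \<open>Irreducible algebraic curve: irreducible algebraic set of (Krull) dimension 1, i.e. the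
  longest chain of irreducible algebraic subsets ending at C has length 1.\<close>
definition irreducible_curve :: "(complex ^ 'g) set \<Rightarrow> bool" where
  "irreducible_curve C \<longleftrightarrow> irreducible_alg C \<and>
     (\<exists>Y. irreducible_alg Y \<and> Y \<subset> C) \<and>
     (\<forall>Y. irreducible_alg Y \<and> Y \<subset> C \<longrightarrow> \<not> (\<exists>W. irreducible_alg W \<and> W \<subset> Y))"

text \<open>Puiseux series at infinity: a Laurent series in s = t^(1/N) (principal root) with
  finitely many positive powers; a k is the coefficient of s^k.\<close>
definition puiseux_val :: "nat \<Rightarrow> (int \<Rightarrow> complex) \<Rightarrow> complex \<Rightarrow> complex" where
  "puiseux_val N a t = infsum (\<lambda>k. a k * (t powr (1 / of_nat N)) powi k) UNIV"

definition branch_fun :: "nat \<Rightarrow> ('g \<Rightarrow> int \<Rightarrow> complex) \<Rightarrow> complex \<Rightarrow> complex ^ 'g" where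
  "branch_fun N a t = (\<chi> j. puiseux_val N (a j) t)"

text \<open>A branch of C in the coordinate z_i, convergent for |z_i| > R.\<close>
definition is_branch :: "(complex ^ 'g) set \<Rightarrow> 'g \<Rightarrow> nat \<Rightarrow> ('g \<Rightarrow> int \<Rightarrow> complex) \<Rightarrow> real \<Rightarrow> bool" where
  "is_branch C i N a R \<longleftrightarrow> 0 \<le> R \<and> 0 < N \<and>
     (\<exists>c\<in>C. \<exists>d\<in>C. c $ i \<noteq> d $ i) \<and>
     (\<forall>j. \<exists>M. \<forall>k>M. a j k = 0) \<and>
     (\<forall>j s. R < norm s ^ N \<longrightarrow> (\<lambda>k. a j k * s powi k) summable_on UNIV) \<and>
     (\<forall>j. \<exists>P :: complex poly poly. P \<noteq> 0 \<and>
         (\<forall>t. R < norm t \<longrightarrow> poly (poly P [:puiseux_val N (a j) t:]) t = 0)) \<and>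
     (\<forall>t. R < norm t \<longrightarrow> branch_fun N a t $ i = t) \<and>
     (\<forall>t. R < norm t \<longrightarrow> branch_fun N a t \<in> C)"

text \<open>Linear branch: all exponents of t are at most 1 (exponent of s at most N).\<close>
definition linear_branch :: "nat \<Rightarrow> ('g \<Rightarrow> int \<Rightarrow> complex) \<Rightarrow> bool" where
  "linear_branch N a \<longleftrightarrow> (\<forall>j k. int N < k \<longrightarrow> a j k = 0)"

definition branch_direction :: "nat \<Rightarrow> ('g \<Rightarrow> int \<Rightarrow> complex) \<Rightarrow> complex ^ 'g" where
  "branch_direction N a = (\<chi> j. a j (int N))"

definition Gamma_set :: "nat \<Rightarrow> ('g \<Rightarrow> int \<Rightarrow> complex) \<Rightarrow> real \<Rightarrow> complex ^ 'g
    \<Rightarrow> complex \<Rightarrow> complex \<Rightarrow> (complex ^ 'g) set" where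
  "Gamma_set N a R \<mu> w0 w1 = zariski_closure
     {branch_fun N a (w0 + \<kappa> * w1) - \<kappa> *s \<mu> | \<kappa>. R < norm (w0 + \<kappa> * w1)}"

end

theory Submission
  imports Defs "HOL-Library.Function_Algebras" "HOL-Real_Asymp.Real_Asymp"
begin


type_synonym 'g fn = "complex ^ ('g::finite) \<Rightarrow> complex"

inductive_set PF :: "('g::finite) set \<Rightarrow> 'g fn set" for S :: "'g set" where
  PF_const: "(\<lambda>z. c) \<in> PF S"
| PF_coord: "i \<in> S \<Longrightarrow> (\<lambda>z. z $ i) \<in> PF S"
| PF_add: "p \<in> PF S \<Longrightarrow> q \<in> PF S \<Longrightarrow> p + q \<in> PF S"
| PF_mult: "p \<in> PF S \<Longrightarrow> q \<in> PF S \<Longrightarrow> p * q \<in> PF S"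

lemma PF_zero: "0 \<in> PF S"
  using PF_const[of 0 S] by (simp add: zero_fun_def)

lemma PF_one: "1 \<in> PF S"
  using PF_const[of 1 S] by (simp add: one_fun_def)

lemma PF_uminus: "p \<in> PF S \<Longrightarrow> - p \<in> PF S"
proof -
  assume "p \<in> PF S"
  hence "(\<lambda>z. -1) * p \<in> PF S" by (intro PF_mult PF_const)
  moreover have "(\<lambda>z. -1) * p = - p" by (rule ext) simp
  ultimately show ?thesis by simp
qed

lemma PF_diff: "p \<in> PF S \<Longrightarrow> q \<in> PF S \<Longrightarrow> p - q \<in> PF S"
  using PF_add[OF _ PF_uminus] by (metis diff_conv_add_uminus)

lemma PF_sum: "(\<And>x. x \<in> A \<Longrightarrow> f x \<in> PF S) \<Longrightarrow> sum f A \<in> PF S"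
  by (induction A rule: infinite_finite_induct) (auto intro: PF_zero PF_add)

lemma PF_mono: "p \<in> PF S \<Longrightarrow> S \<subseteq> T \<Longrightarrow> p \<in> PF T"
  by (induction rule: PF.induct) (auto intro: PF.intros)

lemma poly_funs_PF: "poly_funs = PF UNIV"
proof
  show "poly_funs \<subseteq> PF UNIV"
  proof
    fix p assume "p \<in> poly_funs"
    then show "p \<in> PF UNIV"
    proof (induction rule: poly_funs.induct)
      case (pf_add p q)
      have "(\<lambda>z. p z + q z) = p + q" by (simp add: plus_fun_def)
      then show ?case using pf_add PF_add by metis
    next
      case (pf_mult p q)
      have "(\<lambda>z. p z * q z) = p * q" by (simp add: times_fun_def)
      then show ?case using pf_mult PF_mult by metis
    qed (auto intro: PF.intros)
  qed
  show "PF UNIV \<subseteq> poly_funs"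
  proof
    fix p assume "p \<in> PF UNIV"
    then show "p \<in> poly_funs"
    proof (induction rule: PF.induct)
      case (PF_add p q)
      have "(\<lambda>z. p z + q z) = p + q" by (simp add: plus_fun_def)
      then show ?case using PF_add poly_funs.pf_add by metis
    next
      case (PF_mult p q)
      have "(\<lambda>z. p z * q z) = p * q" by (simp add: times_fun_def)
      then show ?case using PF_mult poly_funs.pf_mult by metis
    qed (auto intro: poly_funs.intros)
  qed
qed

definition ideal_in :: "('g::finite) set \<Rightarrow> 'g fn set \<Rightarrow> bool" where
  "ideal_in S I \<longleftrightarrow> I \<subseteq> PF S \<and> 0 \<in> I \<and> (\<forall>f\<in>I. \<forall>g\<in>I. f + g \<in> I)
      \<and> (\<forall>h\<in>PF S. \<forall>f\<in>I. h * f \<in> I)"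

definition gen :: "('g::finite) set \<Rightarrow> 'g fn set \<Rightarrow> 'g fn set" where
  "gen S F = {(\<Sum>g\<in>F. h g * g) | h. \<forall>g\<in>F. h g \<in> PF S}"

definition Noeth :: "('g::finite) set \<Rightarrow> bool" where
  "Noeth S \<longleftrightarrow> (\<forall>I. ideal_in S I \<longrightarrow> (\<exists>F. finite F \<and> F \<subseteq> I \<and> I \<subseteq> gen S F))"

lemma ideal_sum: "ideal_in S I \<Longrightarrow> (\<And>x. x \<in> A \<Longrightarrow> f x \<in> I) \<Longrightarrow> sum f A \<in> I"
  unfolding ideal_in_def
  by (induction A rule: infinite_finite_induct) auto

lemma gen_subset: "ideal_in S I \<Longrightarrow> F \<subseteq> I \<Longrightarrow> gen S F \<subseteq> I"
  unfolding gen_def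
  by (auto intro!: ideal_sum) (auto simp: ideal_in_def)

lemma Noeth_empty: "Noeth {}"
  unfolding Noeth_def
proof (intro allI impI)
  fix I :: "('g::finite) fn set" assume I: "ideal_in {} I"
  have const: "\<exists>c. p = (\<lambda>z. c)" if "p \<in> PF {}" for p :: "'g fn"
    using that by (induction rule: PF.induct) (auto simp: plus_fun_def times_fun_def)
  show "\<exists>F. finite F \<and> F \<subseteq> I \<and> I \<subseteq> gen {} F"
  proof (cases "I \<subseteq> {0}")
    case True
    then show ?thesis by (intro exI[of _ "{}"]) (auto simp: gen_def)
  next
    case False
    then obtain f where f: "f \<in> I" "f \<noteq> 0" by auto
    then obtain c where c: "f = (\<lambda>z. c)" using const I by (auto simp: ideal_in_def)
    with f have "c \<noteq> 0" by (auto simp: zero_fun_def)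
    show ?thesis
    proof (intro exI[of _ "{f}"] conjI)
      show "I \<subseteq> gen {} {f}"
      proof
        fix g assume "g \<in> I"
        then obtain d where d: "g = (\<lambda>z. d)" using const I by (auto simp: ideal_in_def)
        have "g = (\<lambda>z. d / c) * f" using \<open>c \<noteq> 0\<close> by (auto simp: c d)
        then show "g \<in> gen {} {f}" unfolding gen_def
          by (intro CollectI exI[of _ "\<lambda>_. (\<lambda>z. d / c)"]) (auto intro: PF_const)
      qed
    qed (use f in simp_all)
  qed
qed


definition Rp :: "('g::finite) set \<Rightarrow> 'g fn poly set" where
  "Rp S = {p. \<forall>k. coeff p k \<in> PF S}"

lemma Rp_add: "p \<in> Rp S \<Longrightarrow> q \<in> Rp S \<Longrightarrow> p + q \<in> Rp S"
  by (auto simp: Rp_def intro: PF_add)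

lemma Rp_mult: "p \<in> Rp S \<Longrightarrow> q \<in> Rp S \<Longrightarrow> p * q \<in> Rp S"
  unfolding Rp_def
  by (auto intro!: coeff_mult_semiring_closed[where R="PF S"] PF_zero PF_add PF_mult)

lemma Rp_uminus: "p \<in> Rp S \<Longrightarrow> - p \<in> Rp S"
  by (auto simp: Rp_def intro: PF_uminus)

lemma Rp_diff: "p \<in> Rp S \<Longrightarrow> q \<in> Rp S \<Longrightarrow> p - q \<in> Rp S"
  by (auto simp: Rp_def intro: PF_diff)

lemma Rp_const: "h \<in> PF S \<Longrightarrow> [:h:] \<in> Rp S"
  by (auto simp: Rp_def coeff_pCons PF_zero split: nat.splits)

lemma Rp_zero: "0 \<in> Rp S"
  by (auto simp: Rp_def PF_zero)

lemma Rp_monom: "h \<in> PF S \<Longrightarrow> monom h k \<in> Rp S"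
  by (auto simp: Rp_def coeff_monom PF_zero)

lemma Rp_sum: "(\<And>x. x \<in> A \<Longrightarrow> f x \<in> Rp S) \<Longrightarrow> sum f A \<in> Rp S"
  by (induction A rule: infinite_finite_induct) (auto intro: Rp_zero Rp_add)

lemma Rp_pCons: "pCons a p \<in> Rp S \<longleftrightarrow> a \<in> PF S \<and> p \<in> Rp S"
  unfolding Rp_def
  by (auto simp: coeff_pCons split: nat.splits)

lemma ev_PF: "p \<in> Rp S \<Longrightarrow> poly p (\<lambda>z. z $ y) \<in> PF (insert y S)"
proof (induction p)
  case 0
  show ?case unfolding poly_0 by (rule PF_zero)
next
  case (pCons a p)
  then have "a \<in> PF S" "p \<in> Rp S" by (auto simp: Rp_pCons)
  then have "a \<in> PF (insert y S)" "poly p (\<lambda>z. z $ y) \<in> PF (insert y S)"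
    using pCons by (auto intro: PF_mono)
  have "poly (pCons a p) (\<lambda>z. z $ y) = a + (\<lambda>z. z $ y) * poly p (\<lambda>z. z $ y)"
    by (simp only: poly_pCons)
  moreover have "(\<lambda>z. z $ y) \<in> PF (insert y S)" by (rule PF_coord) simp
  ultimately show ?case using PF_add PF_mult \<open>a \<in> PF (insert y S)\<close>
       \<open>poly p (\<lambda>z. z $ y) \<in> PF (insert y S)\<close> by metis
qed

lemma PF_surj:
  assumes "f \<in> PF (insert y S)"
  shows "\<exists>p\<in>Rp S. poly p (\<lambda>z. z $ y) = f"
  using assms
proof (induction rule: PF.induct)
  case (PF_const c)
  then show ?case by (intro bexI[of _ "[:(\<lambda>z. c):]"] Rp_const PF.PF_const) auto
next
  case (PF_coord i)
  show ?case
  proof (cases "i = y")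
    case True
    then show ?thesis
      by (intro bexI[of _ "monom 1 1"] Rp_monom PF_one) (auto simp: poly_monom)
  next
    case False
    with PF_coord have "i \<in> S" by auto
    then show ?thesis
      by (intro bexI[of _ "[:(\<lambda>z. z $ i):]"] Rp_const PF.PF_coord) auto
  qed
next
  case (PF_add p q)
  then obtain p' q' where "p' \<in> Rp S" "q' \<in> Rp S" "poly p' (\<lambda>z. z $ y) = p" "poly q' (\<lambda>z. z $ y) = q"
    by blast
  then show ?case by (intro bexI[of _ "p' + q'"] Rp_add) (simp_all only: poly_add)
next
  case (PF_mult p q)
  then obtain p' q' where "p' \<in> Rp S" "q' \<in> Rp S" "poly p' (\<lambda>z. z $ y) = p" "poly q' (\<lambda>z. z $ y) = q"
    by blast
  then show ?case by (intro bexI[of _ "p' * q'"] Rp_mult) (simp_all only: poly_mult)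
qed


definition genp :: "('g::finite) set \<Rightarrow> 'g fn poly set \<Rightarrow> 'g fn poly set" where
  "genp S G = {(\<Sum>q\<in>G. r q * q) | r. \<forall>q\<in>G. r q \<in> Rp S}"

lemma gen_sum_closed:
  assumes "finite G"
  shows "0 \<in> genp S G" and "a \<in> genp S G \<Longrightarrow> b \<in> genp S G \<Longrightarrow> a + b \<in> genp S G"
    and "q \<in> G \<Longrightarrow> r \<in> Rp S \<Longrightarrow> r * q \<in> genp S G"
proof -
  show "0 \<in> genp S G" unfolding genp_def
    by (intro CollectI exI[of _ "\<lambda>_. 0"]) (auto intro: Rp_zero)
next
  assume "a \<in> genp S G" "b \<in> genp S G"
  then obtain r1 r2 where r: "\<forall>q\<in>G. r1 q \<in> Rp S" "\<forall>q\<in>G. r2 q \<in> Rp S"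
    "a = (\<Sum>q\<in>G. r1 q * q)" "b = (\<Sum>q\<in>G. r2 q * q)" unfolding genp_def by blast
  then have "a + b = (\<Sum>q\<in>G. (r1 q + r2 q) * q)"
    by (simp add: sum.distrib distrib_right)
  then show "a + b \<in> genp S G" unfolding genp_def using r(1,2)
    by (intro CollectI exI[of _ "\<lambda>q. r1 q + r2 q"]) (auto intro: Rp_add)
next
  assume q: "q \<in> G" and r: "r \<in> Rp S"
  have "(\<Sum>q'\<in>G. (if q' = q then r else 0) * q') = r * q"
  proof -
    have "(\<Sum>q'\<in>G. (if q' = q then r else 0) * q') = (\<Sum>q'\<in>G. if q' = q then r * q else 0)"
      by (rule sum.cong) auto
    also have "\<dots> = r * q" using q assms(1) by (simp add: sum.delta)
    finally show ?thesis .
  qed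
  then show "r * q \<in> genp S G" unfolding genp_def using r
    by (intro CollectI exI[of _ "\<lambda>q'. if q' = q then r else 0"]) (auto intro: Rp_zero)
qed

lemma gen_sum_closed_sum:
  assumes "finite G"
  shows "(\<And>x. x \<in> A \<Longrightarrow> f x \<in> genp S G) \<Longrightarrow> sum f A \<in> genp S G"
  by (induction A rule: infinite_finite_induct)
     (use gen_sum_closed[OF assms(1), where S=S] in auto)




lemma Noeth_insert:
  assumes N: "Noeth S"
  shows "Noeth (insert y S)"
  unfolding Noeth_def
proof (intro allI impI)
  fix I assume I: "ideal_in (insert y S) I"
  define X where "X = (\<lambda>z::complex^'a. z $ y)"
  have I0: "0 \<in> I" and Iadd: "\<And>f g. f \<in> I \<Longrightarrow> g \<in> I \<Longrightarrow> f + g \<in> I"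
    and Imult: "\<And>h f. h \<in> PF (insert y S) \<Longrightarrow> f \<in> I \<Longrightarrow> h * f \<in> I"
    and IPF: "I \<subseteq> PF (insert y S)"
    using I unfolding ideal_in_def by auto
  define J where "J = {p \<in> Rp S. poly p X \<in> I}"
  have J_add: "p + q \<in> J" if "p \<in> J" "q \<in> J" for p q
    using that by (auto simp: J_def poly_add intro: Rp_add Iadd)
  have J_mult: "r * p \<in> J" if "r \<in> Rp S" "p \<in> J" for r p
    using that ev_PF[of r S y] by (auto simp: J_def poly_mult X_def intro: Rp_mult Imult)
  have J_zero: "0 \<in> J" using I0 by (simp add: J_def Rp_zero)
  have m1: "[:-1:] \<in> Rp S" by (intro Rp_const PF_uminus PF_one)
  have J_uminus: "- p \<in> J" if "p \<in> J" for p
    using J_mult[OF m1 that] by simp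
  have J_diff: "p - q \<in> J" if "p \<in> J" "q \<in> J" for p q
    using J_add[OF that(1) J_uminus[OF that(2)]] by simp
  have J_sum: "sum f A \<in> J" if "\<And>x. x \<in> A \<Longrightarrow> f x \<in> J" for f and A :: "'b set"
    using that by (induction A rule: infinite_finite_induct) (auto intro: J_zero J_add)
  have JRp: "J \<subseteq> Rp S" by (auto simp: J_def)
  define L where "L d = {coeff p d | p. p \<in> J \<and> degree p \<le> d}" for d
  have L_ideal: "ideal_in S (L d)" for d
    unfolding ideal_in_def
  proof (intro conjI ballI)
    show "L d \<subseteq> PF S" using JRp by (auto simp: L_def Rp_def)
    show "0 \<in> L d" unfolding L_def using J_zero by (auto intro!: exI[of _ 0])
  next
    fix f g assume "f \<in> L d" "g \<in> L d"
    then obtain p q where "p \<in> J" "degree p \<le> d" "f = coeff p d"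
       "q \<in> J" "degree q \<le> d" "g = coeff q d" by (auto simp: L_def)
    then show "f + g \<in> L d" unfolding L_def
      by (intro CollectI exI[of _ "p + q"]) (auto intro: J_add degree_add_le)
  next
    fix h f assume "h \<in> PF S" "f \<in> L d"
    then obtain p where p: "p \<in> J" "degree p \<le> d" "f = coeff p d" by (auto simp: L_def)
    have "[:h:] * p \<in> J" by (rule J_mult[OF Rp_const[OF \<open>h \<in> PF S\<close>] p(1)])
    moreover have "degree ([:h:] * p) \<le> d" using p(2) degree_smult_le[of h p] by simp
    moreover have "coeff ([:h:] * p) d = h * f" using p by simp
    ultimately show "h * f \<in> L d" unfolding L_def
      by (intro CollectI exI[of _ "[:h:] * p"]) simp
  qed
  have L_Suc: "L d \<subseteq> L (Suc d)" for d
  proof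
    fix f assume "f \<in> L d"
    then obtain p where p: "p \<in> J" "degree p \<le> d" "f = coeff p d" by (auto simp: L_def)
    have "monom 1 1 * p \<in> J" by (rule J_mult[OF Rp_monom[OF PF_one] p(1)])
    moreover have "monom 1 1 * p = pCons 0 p" by (simp add: monom_Suc monom_0)
    ultimately have "pCons 0 p \<in> J" by simp
    moreover have "degree (pCons 0 p) \<le> Suc d" using p(2) degree_pCons_le[of 0 p] by simp
    moreover have "coeff (pCons 0 p) (Suc d) = f" using p by simp
    ultimately show "f \<in> L (Suc d)" unfolding L_def
      by (intro CollectI exI[of _ "pCons 0 p"]) simp
  qed
  have L_mono: "d \<le> e \<Longrightarrow> L d \<subseteq> L e" for d e
    using lift_Suc_mono_le[of L, OF L_Suc] by blast
  define Lu where "Lu = (\<Union>d. L d)"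
  have Lu_ideal: "ideal_in S Lu"
    unfolding ideal_in_def
  proof (intro conjI ballI)
    show "Lu \<subseteq> PF S" using L_ideal unfolding Lu_def ideal_in_def by blast
    show "0 \<in> Lu" using L_ideal by (auto simp: Lu_def ideal_in_def)
  next
    fix f g assume "f \<in> Lu" "g \<in> Lu"
    then obtain d e where "f \<in> L d" "g \<in> L e" by (auto simp: Lu_def)
    then have "f \<in> L (max d e)" "g \<in> L (max d e)" using L_mono[of d "max d e"] L_mono[of e "max d e"] by auto
    then show "f + g \<in> Lu" using L_ideal[of "max d e"] by (auto simp: Lu_def ideal_in_def)
  next
    fix h f assume "h \<in> PF S" "f \<in> Lu"
    then show "h * f \<in> Lu" using L_ideal unfolding Lu_def ideal_in_def by blast
  qed
  obtain F where F: "finite F" "F \<subseteq> Lu" "Lu \<subseteq> gen S F"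
    using N Lu_ideal unfolding Noeth_def by blast
  have "\<forall>f\<in>F. \<exists>d. f \<in> L d" using F(2) by (auto simp: Lu_def)
  then obtain dd where dd: "\<forall>f\<in>F. f \<in> L (dd f)" by metis
  define m where "m = Max (insert 0 (dd ` F))"
  have "F \<subseteq> L m"
  proof
    fix f assume "f \<in> F"
    then have "dd f \<le> m" unfolding m_def using F(1) by (auto intro: Max_ge)
    then show "f \<in> L m" using dd \<open>f \<in> F\<close> L_mono by blast
  qed
  then have Lm: "L d \<subseteq> L m" for d
  proof -
    have "L d \<subseteq> Lu" unfolding Lu_def by blast
    also have "\<dots> \<subseteq> gen S F" by (rule F(3))
    also have "\<dots> \<subseteq> L m" by (rule gen_subset[OF L_ideal[of m] \<open>F \<subseteq> L m\<close>])
    finally show ?thesis .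
  qed
  have "\<forall>d. \<exists>Fd. finite Fd \<and> Fd \<subseteq> L d \<and> L d \<subseteq> gen S Fd"
    using N L_ideal unfolding Noeth_def by blast
  then obtain FF where FF: "\<And>d. finite (FF d)" "\<And>d. FF d \<subseteq> L d" "\<And>d. L d \<subseteq> gen S (FF d)"
    by metis
  have "\<forall>d f. \<exists>p. f \<in> FF d \<longrightarrow> (p \<in> J \<and> degree p \<le> d \<and> coeff p d = f)"
    using FF(2) by (auto simp: L_def)
  then obtain P where P: "\<And>d f. f \<in> FF d \<Longrightarrow> P d f \<in> J \<and> degree (P d f) \<le> d \<and> coeff (P d f) d = f"
    by metis
  define G where "G = (\<Union>d\<in>{..m}. P d ` FF d)"
  have G_fin: "finite G" unfolding G_def using FF(1) by auto
  have GJ: "G \<subseteq> J" unfolding G_def using P by auto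
  have reduce: "\<exists>p'. p' \<in> J \<and> degree p' \<le> n \<and> coeff p' n = 0 \<and> p - p' \<in> genp S G"
    if p: "p \<in> J" "degree p \<le> n" for p n
  proof -
    define e where "e = min n m"
    have "coeff p n \<in> L n" unfolding L_def using p by blast
    then have "coeff p n \<in> L e"
      using Lm[of n] by (cases "n \<le> m") (auto simp: e_def min_def)
    then have "coeff p n \<in> gen S (FF e)" using FF(3) by blast
    then obtain h where h: "\<forall>f\<in>FF e. h f \<in> PF S" "coeff p n = (\<Sum>f\<in>FF e. h f * f)"
      unfolding gen_def by blast
    define q where "q = (\<Sum>f\<in>FF e. monom (h f) (n - e) * P e f)"
    have en: "e \<le> n" "e \<le> m" by (auto simp: e_def)
    have qG: "q \<in> genp S G" unfolding q_def
    proof (rule gen_sum_closed_sum[OF G_fin])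
      fix f assume f: "f \<in> FF e"
      then have "P e f \<in> G" unfolding G_def using en by auto
      then show "monom (h f) (n - e) * P e f \<in> genp S G"
        using gen_sum_closed(3)[OF G_fin] Rp_monom h(1) f by blast
    qed
    have qJ: "q \<in> J" unfolding q_def
      using P h(1) by (auto intro!: J_sum J_mult Rp_monom)
    have qdeg: "degree q \<le> n" unfolding q_def
    proof (rule degree_sum_le[OF FF(1)])
      fix f assume "f \<in> FF e"
      then have "degree (P e f) \<le> e" using P by blast
      then show "degree (monom (h f) (n - e) * P e f) \<le> n"
        using degree_mult_le[of "monom (h f) (n - e)" "P e f"] degree_monom_le[of "h f" "n - e"] en
        by linarith
    qed
    have qc: "coeff q n = coeff p n"
    proof -
      have "coeff q n = (\<Sum>f\<in>FF e. coeff (monom (h f) (n - e) * P e f) n)"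
        unfolding q_def by (simp add: coeff_sum)
      also have "\<dots> = (\<Sum>f\<in>FF e. h f * f)"
      proof (rule sum.cong)
        fix f assume "f \<in> FF e"
        then have "coeff (P e f) e = f" using P by blast
        then show "coeff (monom (h f) (n - e) * P e f) n = h f * f"
          using en by (simp add: coeff_monom_mult)
      qed simp
      finally show ?thesis using h(2) by simp
    qed
    show ?thesis
    proof (intro exI[of _ "p - q"] conjI)
      show "p - q \<in> J" using J_diff[OF p(1) qJ] .
      show "degree (p - q) \<le> n" using degree_diff_le[OF p(2) qdeg] .
      show "coeff (p - q) n = 0" using qc by simp
      show "p - (p - q) \<in> genp S G" using qG by simp
    qed
  qed
  have main: "\<forall>p. p \<in> J \<longrightarrow> degree p \<le> n \<longrightarrow> p \<in> genp S G" for n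
  proof (induction n)
    case 0
    show ?case
    proof (intro allI impI)
      fix p assume p: "p \<in> J" "degree p \<le> 0"
      obtain p' where p': "p' \<in> J" "degree p' \<le> 0" "coeff p' 0 = 0" "p - p' \<in> genp S G"
        using reduce[OF p] by blast
      have "p' = 0" using p'(2,3) by (metis degree_0_id pCons_0_0 le_zero_eq)
      then show "p \<in> genp S G" using p'(4) by simp
    qed
  next
    case (Suc n)
    show ?case
    proof (intro allI impI)
      fix p assume p: "p \<in> J" "degree p \<le> Suc n"
      obtain p' where p': "p' \<in> J" "degree p' \<le> Suc n" "coeff p' (Suc n) = 0" "p - p' \<in> genp S G"
        using reduce[OF p] by blast
      have "degree p' \<le> n"
      proof (rule ccontr)
        assume "\<not> degree p' \<le> n"
        then have "degree p' = Suc n" using p'(2) by simp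
        then have "p' = 0" using p'(3) by (metis leading_coeff_0_iff)
        then show False using \<open>degree p' = Suc n\<close> by simp
      qed
      then have "p' \<in> genp S G" using Suc p'(1) by blast
      then have "(p - p') + p' \<in> genp S G" using gen_sum_closed(2)[OF G_fin p'(4)] by blast
      then show "p \<in> genp S G" by simp
    qed
  qed
  define ev where "ev q = poly q X" for q
  show "\<exists>F. finite F \<and> F \<subseteq> I \<and> I \<subseteq> gen (insert y S) F"
  proof (intro exI[of _ "ev ` G"] conjI)
    show "finite (ev ` G)" using G_fin by simp
    show "ev ` G \<subseteq> I" using GJ by (auto simp: J_def ev_def)
    show "I \<subseteq> gen (insert y S) (ev ` G)"
    proof
      fix f assume "f \<in> I"
      then obtain p where p: "p \<in> Rp S" "poly p X = f" using PF_surj IPF unfolding X_def by blast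
      then have "p \<in> J" using \<open>f \<in> I\<close> by (simp add: J_def)
      then have "p \<in> genp S G" using main by blast
      then obtain r where r: "\<forall>q\<in>G. r q \<in> Rp S" "p = (\<Sum>q\<in>G. r q * q)" unfolding genp_def by blast
      have "f = (\<Sum>q\<in>G. ev (r q) * ev q)" using p(2) r(2)
        by (simp add: ev_def poly_sum poly_mult)
      also have "\<dots> = (\<Sum>g\<in>ev ` G. (\<Sum>q\<in>{q\<in>G. ev q = g}. ev (r q)) * g)"
        by (subst sum.image_gen[OF G_fin, of _ ev]) (auto simp: sum_distrib_right intro!: sum.cong)
      finally show "f \<in> gen (insert y S) (ev ` G)" unfolding gen_def
        using r(1) by (auto intro!: exI PF_sum ev_PF simp: ev_def X_def)
    qed
  qed
qed

lemma Noeth_all: "Noeth (UNIV :: ('g::finite) set)"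
proof -
  have "Noeth (A :: 'g set)" if "finite A" for A
    using that by (induction A rule: finite_induct) (auto intro: Noeth_empty Noeth_insert)
  then show ?thesis by simp
qed




lemma sum_fun_app: "(sum f A) z = (\<Sum>x\<in>A. f x z)"
  for f :: "'a \<Rightarrow> 'b \<Rightarrow> 'c::comm_monoid_add"
  by (induction A rule: infinite_finite_induct) auto

lemma alg_chain_wf:
  "wf {(A :: (complex ^ ('g::finite)) set, B). algebraic_set A \<and> algebraic_set B \<and> A \<subset> B}"
proof (rule ccontr)
  assume "\<not> ?thesis"
  then obtain V where V0: "\<forall>i. (V (Suc i), V i) \<in> {(A :: (complex ^ 'g) set, B). algebraic_set A \<and> algebraic_set B \<and> A \<subset> B}"
    unfolding wf_iff_no_infinite_down_chain by blast
  then have V: "\<And>i. algebraic_set (V (Suc i)) \<and> algebraic_set (V i) \<and> V (Suc i) \<subset> V i"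
    by simp
  have VS: "\<And>n. V (Suc n) \<subseteq> V n" using V by blast
  have Vmono: "V j \<subseteq> V i" if "i \<le> j" for i j
    using lift_Suc_antimono_le[of V, OF VS that] .
  define I where "I = {f \<in> poly_funs. \<exists>k. \<forall>z\<in>V k. f z = 0}"
  have "ideal_in UNIV I"
    unfolding ideal_in_def
  proof (intro conjI ballI)
    show "I \<subseteq> PF UNIV" using poly_funs_PF by (auto simp: I_def)
    show "0 \<in> I" using poly_funs_PF PF_zero by (auto simp: I_def)
  next
    fix f g assume "f \<in> I" "g \<in> I"
    then obtain k l where k: "f \<in> PF UNIV" "\<forall>z\<in>V k. f z = 0" "g \<in> PF UNIV" "\<forall>z\<in>V l. g z = 0"
      using poly_funs_PF by (auto simp: I_def)
    have "\<forall>z\<in>V (max k l). (f + g) z = 0"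
    proof
      fix z assume "z \<in> V (max k l)"
      then have "z \<in> V k" "z \<in> V l" using Vmono[of k "max k l"] Vmono[of l "max k l"] by auto
      then show "(f + g) z = 0" using k by simp
    qed
    then show "f + g \<in> I" using k poly_funs_PF PF_add unfolding I_def by blast
  next
    fix h f :: "complex ^ 'g \<Rightarrow> complex" assume "h \<in> PF UNIV" "f \<in> I"
    then obtain k where k: "f \<in> PF UNIV" "\<forall>z\<in>V k. f z = 0"
      using poly_funs_PF by (auto simp: I_def)
    then have "\<forall>z\<in>V k. (h * f) z = 0" by auto
    then show "h * f \<in> I" using k \<open>h \<in> PF UNIV\<close> poly_funs_PF PF_mult unfolding I_def by blast
  qed
  then obtain F where F: "finite F" "F \<subseteq> I" "I \<subseteq> gen UNIV F"
    using Noeth_all unfolding Noeth_def by blast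
  have "\<forall>f\<in>F. \<exists>k. \<forall>z\<in>V k. f z = 0" using F(2) by (auto simp: I_def)
  then obtain kk where kk: "\<forall>f\<in>F. \<forall>z\<in>V (kk f). f z = 0" by metis
  define m where "m = Max (insert 0 (kk ` F))"
  have Fm: "\<forall>f\<in>F. \<forall>z\<in>V m. f z = 0"
  proof (intro ballI)
    fix f z assume "f \<in> F" "z \<in> V m"
    then have "kk f \<le> m" unfolding m_def using F(1) by (auto intro: Max_ge)
    then show "f z = 0" using kk \<open>f \<in> F\<close> \<open>z \<in> V m\<close> Vmono by blast
  qed
  obtain F' where F': "finite F'" "F' \<subseteq> poly_funs" "V (Suc m) = {z. \<forall>f\<in>F'. f z = 0}"
    using V[of m] unfolding algebraic_set_def by blast
  have "V m \<subseteq> V (Suc m)"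
  proof
    fix z assume z: "z \<in> V m"
    have "f z = 0" if "f \<in> F'" for f
    proof -
      have "f \<in> I" unfolding I_def using that F' by blast
      then obtain h where "f = (\<Sum>g\<in>F. h g * g)" using F(3) unfolding gen_def by blast
      then have "f z = (\<Sum>g\<in>F. h g z * g z)" by (simp add: sum_fun_app)
      also have "\<dots> = 0" using Fm z by (intro sum.neutral) simp
      finally show ?thesis .
    qed
    then show "z \<in> V (Suc m)" using F'(3) by blast
  qed
  then show False using V[of m] by blast
qed

lemma singleton_irred: "irreducible_alg {m :: complex ^ ('g::finite)}"
proof -
  have "algebraic_set {m}"
    unfolding algebraic_set_def
  proof (intro exI[of _ "(\<lambda>j. (\<lambda>z. z $ j - m $ j)) ` UNIV"] conjI)
    show "finite ((\<lambda>j. (\<lambda>z. z $ j - m $ j)) ` UNIV)" by simp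
    show "(\<lambda>j. (\<lambda>z. z $ j - m $ j)) ` UNIV \<subseteq> poly_funs"
    proof
      fix f assume "f \<in> (\<lambda>j. (\<lambda>z. z $ j - m $ j)) ` (UNIV :: 'g set)"
      then obtain j where "f = (\<lambda>z. (\<lambda>z. z $ j) z + (\<lambda>z. - m $ j) z)" by auto
      then show "f \<in> poly_funs" using poly_funs.pf_add[OF poly_funs.pf_coord poly_funs.pf_const, of j "- m $ j"] by simp
    qed
    show "{m} = {z. \<forall>f\<in>(\<lambda>j. (\<lambda>z. z $ j - m $ j)) ` UNIV. f z = 0}"
      by (auto simp: vec_eq_iff)
  qed
  moreover have "\<not> (\<exists>A1 A2. algebraic_set A1 \<and> algebraic_set A2 \<and> {m} = A1 \<union> A2 \<and> A1 \<noteq> {m} \<and> A2 \<noteq> {m})"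
    by (metis Un_empty subset_singleton_iff sup_ge1 sup_ge2)
  ultimately show ?thesis unfolding irreducible_alg_def by simp
qed

lemma curve_dense:
  fixes C S :: "(complex ^ ('g::finite)) set"
  assumes C: "irreducible_curve C" and SC: "S \<subseteq> C" and Sinf: "infinite S"
  shows "C \<subseteq> zariski_closure S"
proof
  fix z assume zC: "z \<in> C"
  show "z \<in> zariski_closure S"
    unfolding zariski_closure_def
  proof (intro CollectI ballI impI)
    fix p assume p: "p \<in> poly_funs" "\<forall>s\<in>S. p s = 0"
    show "p z = 0"
    proof (rule ccontr)
      assume pz: "p z \<noteq> 0"
      from C have "algebraic_set C" by (simp add: irreducible_curve_def irreducible_alg_def)
      then obtain F where F: "finite F" "F \<subseteq> poly_funs" "C = {x. \<forall>f\<in>F. f x = 0}"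
        unfolding algebraic_set_def by blast
      define A where "A = {x. \<forall>f\<in>insert p F. f x = 0}"
      have A_alg: "algebraic_set A" unfolding algebraic_set_def A_def
        using F p by blast
      have AC: "A \<subseteq> C" using F(3) by (auto simp: A_def)
      have zA: "z \<notin> A" using pz by (auto simp: A_def)
      have SA: "S \<subseteq> A" using SC p(2) F(3) by (auto simp: A_def)
      define Q where "Q = {M. algebraic_set M \<and> M \<subseteq> A \<and> infinite M}"
      have "A \<in> Q" using A_alg infinite_super[OF SA Sinf] by (auto simp: Q_def)
      then obtain M where M: "M \<in> Q"
        and Mmin: "\<And>Y. (Y, M) \<in> {(A, B). algebraic_set A \<and> algebraic_set B \<and> A \<subset> B} \<Longrightarrow> Y \<notin> Q"
        using wfE_min[OF alg_chain_wf \<open>A \<in> Q\<close>] by blast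
      have Mirr: "irreducible_alg M"
        unfolding irreducible_alg_def
      proof (intro conjI)
        show "M \<noteq> {}" using M by (auto simp: Q_def)
        show "algebraic_set M" using M by (auto simp: Q_def)
      next
        show "\<not> (\<exists>A1 A2. algebraic_set A1 \<and> algebraic_set A2 \<and> M = A1 \<union> A2 \<and> A1 \<noteq> M \<and> A2 \<noteq> M)"
        proof
        assume "\<exists>A1 A2. algebraic_set A1 \<and> algebraic_set A2 \<and> M = A1 \<union> A2 \<and> A1 \<noteq> M \<and> A2 \<noteq> M"
        then obtain A1 A2 where A12: "algebraic_set A1" "algebraic_set A2" "M = A1 \<union> A2" "A1 \<noteq> M" "A2 \<noteq> M"
          by blast
        have "A1 \<notin> Q" using Mmin[of A1] A12 M by (auto simp: Q_def)
        moreover have "A2 \<notin> Q" using Mmin[of A2] A12 M by (auto simp: Q_def)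
        ultimately have "finite A1" "finite A2" using A12 M by (auto simp: Q_def)
        then show False using A12(3) M by (auto simp: Q_def)
      qed
      qed
      have MC: "M \<subset> C" using M AC zA zC by (auto simp: Q_def)
      obtain x where "x \<in> M" using Mirr by (auto simp: irreducible_alg_def)
      have "{x} \<subset> M"
      proof -
        have "M \<noteq> {x}" using M by (auto simp: Q_def)
        then show ?thesis using \<open>x \<in> M\<close> by auto
      qed
      then show False using C MC Mirr singleton_irred[of x] unfolding irreducible_curve_def by blast
    qed
  qed
qed




lemma ray_powr:
  fixes w :: complex and x :: real
  assumes "0 < x" "w \<noteq> 0"
  shows "(of_real x * w) powr (1 / of_nat N) = of_real (x powr (1 / real N)) * w powr (1 / of_nat N)"
proof -
  have "of_real x * w \<noteq> 0" using assms by simp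
  then have "(of_real x * w) powr (1 / of_nat N) = exp ((1 / of_nat N) * Ln (of_real x * w))"
    by (simp add: powr_def)
  also have "Ln (of_real x * w) = of_real (ln x) + Ln w" using assms by (simp add: Ln_times_of_real Ln_of_real)
  also have "(1 / of_nat N) * (of_real (ln x) + Ln w) = of_real (ln x / real N) + (1 / of_nat N) * Ln w"
    by (simp add: distrib_left)
  also have "exp (of_real (ln x / real N) + (1 / of_nat N) * Ln w) =
      exp (of_real (ln x / real N)) * exp ((1 / of_nat N) * Ln w)"
    by (simp add: exp_add)
  also have "exp (of_real (ln x / real N)) = (of_real (x powr (1 / real N)) :: complex)"
    using assms by (simp only: exp_of_real) (simp add: powr_def)
  also have "exp ((1 / of_nat N) * Ln w) = w powr (1 / of_nat N)" using assms by (simp add: powr_def)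
  finally show ?thesis .
qed

lemma cpow_N:
  fixes w :: complex
  assumes "0 < N" "w \<noteq> 0"
  shows "(w powr (1 / of_nat N)) ^ N = w"
proof -
  have "(w powr (1 / of_nat N)) ^ N = exp ((1 / of_nat N) * Ln w) ^ N"
    using assms by (simp add: powr_def)
  also have "\<dots> = exp (of_nat N * ((1 / of_nat N) * Ln w))"
    by (rule exp_of_nat_mult[symmetric])
  also have "of_nat N * ((1 / of_nat N) * Ln w) = Ln w" using assms by simp
  finally show ?thesis using assms by simp
qed

lemma rpow_N:
  fixes x :: real
  assumes "0 < N" "0 < x"
  shows "(x powr (1 / real N)) ^ N = x"
  using assms by (simp add: powr_realpow[symmetric] powr_powr)

lemma rpow_k:
  fixes x :: real
  assumes "0 < x"
  shows "(x powr (1 / real N)) ^ k = x powr (real k / real N)"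
  using assms by (simp add: powr_realpow[symmetric] powr_powr)

lemma diff_powr_tendsto:
  fixes p n :: real
  assumes "0 \<le> p" "p < 1" "0 \<le> n"
  shows "((\<lambda>x. (x + n) powr p - x powr p) \<longlongrightarrow> 0) at_top"
proof (rule Lim_null_comparison)
  show "\<forall>\<^sub>F x in at_top. norm ((x + n) powr p - x powr p) \<le> n * x powr (p - 1)"
    using eventually_gt_at_top[of 0]
  proof eventually_elim
    case (elim x)
    have e: "x * (1 + n / x) = x + n" using elim by (simp add: field_simps)
    have "(x * (1 + n / x)) powr p = x powr p * (1 + n / x) powr p"
      using elim assms by (simp add: powr_mult)
    then have "(x + n) powr p = x powr p * (1 + n / x) powr p" using e by simp
    also have "(1 + n / x) powr p \<le> (1 + n / x) powr 1"
      using assms elim by (intro powr_mono) auto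
    also have "\<dots> = 1 + n / x" using assms elim by simp
    finally have "(x + n) powr p \<le> x powr p * (1 + n / x)" using elim by simp
    also have "\<dots> = x powr p + n * x powr (p - 1)"
      using elim by (simp add: powr_diff field_simps)
    finally have u: "(x + n) powr p - x powr p \<le> n * x powr (p - 1)" by simp
    have l: "x powr p \<le> (x + n) powr p" using assms elim by (intro powr_mono2) auto
    show ?case using u l by simp
  qed
  show "((\<lambda>x. n * x powr (p - 1)) \<longlongrightarrow> 0) at_top"
    using assms by (intro tendsto_mult_right_zero tendsto_neg_powr filterlim_ident) auto
qed


lemma neg_tail_tendsto:
  fixes b :: "int \<Rightarrow> complex" and c :: complex and R :: real
  assumes summ: "\<forall>s. R < norm s ^ N \<longrightarrow> (\<lambda>k. b k * s powi k) summable_on UNIV"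
    and c: "c \<noteq> 0" and N: "0 < N"
  shows "((\<lambda>\<rho>. infsum (\<lambda>k. b k * (of_real \<rho> * c) powi k) {..<0}) \<longlongrightarrow> 0) at_top"
proof -
  define \<rho>1 where "\<rho>1 = max 1 ((\<bar>R\<bar> + 1) / norm c ^ N)"
  have r1: "1 \<le> \<rho>1" by (simp add: \<rho>1_def)
  have big: "R < norm (of_real \<rho> * c) ^ N" if "\<rho>1 \<le> \<rho>" for \<rho>
  proof -
    have cpos: "0 < norm c ^ N" using c by simp
    have "\<rho>1 \<le> \<rho>1 ^ N" using r1 N by (simp add: power_increasing[of 1 N \<rho>1, simplified])
    also have "\<dots> \<le> \<rho> ^ N" using r1 that by (intro power_mono) auto
    finally have "(\<bar>R\<bar> + 1) / norm c ^ N \<le> \<rho> ^ N" unfolding \<rho>1_def by simp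
    then have "\<bar>R\<bar> + 1 \<le> \<rho> ^ N * norm c ^ N" using cpos by (simp add: field_simps)
    moreover have "norm (of_real \<rho> * c) ^ N = \<rho> ^ N * norm c ^ N"
      using r1 that by (simp add: norm_mult power_mult_distrib)
    ultimately show ?thesis by linarith
  qed
  define u where "u = (\<lambda>k. b k * (of_real \<rho>1 * c) powi k)"
  have u_abs: "(\<lambda>k. norm (u k)) summable_on {..<0}"
  proof -
    have "u summable_on UNIV" using summ big[of \<rho>1] by (simp add: u_def)
    then have "(\<lambda>k. norm (u k)) summable_on UNIV" by (simp add: summable_on_iff_abs_summable_on_complex)
    then show ?thesis by (rule summable_on_subset_banach) auto
  qed
  define M where "M = infsum (\<lambda>k. norm (u k)) {..<0}"
  show ?thesis
  proof (rule Lim_null_comparison)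
    show "\<forall>\<^sub>F \<rho> in at_top. norm (infsum (\<lambda>k. b k * (of_real \<rho> * c) powi k) {..<0}) \<le> \<rho>1 / \<rho> * M"
      using eventually_ge_at_top[of \<rho>1]
    proof eventually_elim
      case (elim \<rho>)
      have rpos: "0 < \<rho>" using elim r1 by linarith
      define f where "f = (\<lambda>k. b k * (of_real \<rho> * c) powi k)"
      have f_abs: "(\<lambda>k. norm (f k)) summable_on {..<0}"
      proof -
        have "f summable_on UNIV" using summ big[OF elim] by (simp add: f_def)
        then have "(\<lambda>k. norm (f k)) summable_on UNIV" by (simp add: summable_on_iff_abs_summable_on_complex)
        then show ?thesis by (rule summable_on_subset_banach) auto
      qed
      have pt: "norm (f k) \<le> \<rho>1 / \<rho> * norm (u k)" if "k \<in> {..<0}" for k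
      proof -
        have k: "k \<le> -1" using that by simp
        define q where "q = \<rho> / \<rho>1"
        have q1: "1 \<le> q" using elim r1 by (simp add: q_def field_simps)
        have "q powi k \<le> q powi (-1)" by (rule power_int_increasing[OF k q1])
        also have "q powi (-1) = \<rho>1 / \<rho>" by (simp add: q_def)
        finally have qk: "q powi k \<le> \<rho>1 / \<rho>" .
        have e: "norm (of_real \<rho> * c) = (\<rho>1 * norm c) * q"
          using rpos r1 by (simp add: q_def norm_mult field_simps)
        have "norm (f k) = norm (b k) * norm (of_real \<rho> * c) powi k"
          by (simp only: f_def norm_mult norm_power_int)
        also have "\<dots> = norm (b k) * ((\<rho>1 * norm c) powi k * q powi k)"
          by (simp only: e power_int_mult_distrib)
        also have "\<dots> \<le> norm (b k) * ((\<rho>1 * norm c) powi k * (\<rho>1 / \<rho>))"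
          using qk r1 by (intro mult_left_mono) auto
        also have "\<dots> = \<rho>1 / \<rho> * norm (u k)"
          using r1 by (simp add: u_def norm_mult norm_power_int)
        finally show ?thesis .
      qed
      have "norm (infsum f {..<0}) \<le> infsum (\<lambda>k. norm (f k)) {..<0}"
        by (rule norm_infsum_bound[OF f_abs])
      also have "\<dots> \<le> infsum (\<lambda>k. \<rho>1 / \<rho> * norm (u k)) {..<0}"
        using f_abs u_abs pt by (intro infsum_mono summable_on_cmult_right) auto
      also have "\<dots> = \<rho>1 / \<rho> * M" unfolding M_def by (rule infsum_cmult_right) (use u_abs in auto)
      finally show ?case by (simp add: f_def)
    qed
    show "((\<lambda>\<rho>. \<rho>1 / \<rho> * M) \<longlongrightarrow> 0) at_top"
      by real_asymp
  qed
qed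


lemma ray_diff_tendsto:
  fixes b :: "int \<Rightarrow> complex" and w :: complex and R :: real and n :: nat
  assumes summ: "\<forall>s. R < norm s ^ N \<longrightarrow> (\<lambda>k. b k * s powi k) summable_on UNIV"
    and w: "w \<noteq> 0" and N: "0 < N" and bN: "\<forall>k. int N < k \<longrightarrow> b k = 0"
  shows "((\<lambda>x. puiseux_val N b (of_real (x + real n) * w) - puiseux_val N b (of_real x * w)
             - of_nat n * w * b (int N)) \<longlongrightarrow> 0) at_top"
proof -
  define c where "c = w powr (1 / of_nat N)"
  have cN: "c ^ N = w" unfolding c_def by (rule cpow_N[OF N w])
  have c0: "c \<noteq> 0" using cN w N by auto
  define g where "g = (\<lambda>\<rho>. infsum (\<lambda>k. b k * (of_real \<rho> * c) powi k) {..<0})"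
  define F where "F = (\<lambda>\<rho>::real. \<Sum>m\<in>{0..N}. b (int m) * (of_real \<rho> * c) ^ m)"
  have decomp: "infsum (\<lambda>k. b k * (of_real \<rho> * c) powi k) UNIV = g \<rho> + F \<rho>"
    if "R < norm (of_real \<rho> * c) ^ N" for \<rho>
  proof -
    define f where "f = (\<lambda>k. b k * (of_real \<rho> * c) powi k)"
    have fs: "f summable_on UNIV" using summ that by (simp add: f_def)
    have U: "(UNIV :: int set) = {..<0} \<union> ({0..int N} \<union> {int N<..})" by auto
    have s1: "f summable_on {..<0}" by (rule summable_on_subset_banach[OF fs]) auto
    have s2: "f summable_on ({0..int N} \<union> {int N<..})" by (rule summable_on_subset_banach[OF fs]) auto
    have s3: "f summable_on {0..int N}" by (rule summable_on_subset_banach[OF fs]) auto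
    have s4: "f summable_on {int N<..}" by (rule summable_on_subset_banach[OF fs]) auto
    have z: "infsum f {int N<..} = 0" using bN by (intro infsum_0) (auto simp: f_def)
    have "infsum f UNIV = infsum f {..<0} + (infsum f {0..int N} + infsum f {int N<..})"
      by (subst U, subst infsum_Un_disjoint[OF s1 s2], force, subst infsum_Un_disjoint[OF s3 s4]) auto
    also have "infsum f {0..int N} = (\<Sum>k\<in>{0..int N}. f k)" by simp
    also have "\<dots> = (\<Sum>m\<in>{0..N}. f (int m))"
    proof -
      have "{0..int N} = int ` {0..N}" by (simp add: image_int_atLeastAtMost)
      then show ?thesis by (simp add: sum.reindex)
    qed
    also have "\<dots> = F \<rho>" by (simp add: F_def f_def)
    finally show ?thesis using z by (simp add: g_def f_def)
  qed
  have pv: "puiseux_val N b (of_real x * w) = infsum (\<lambda>k. b k * (of_real (x powr (1 / real N)) * c) powi k) UNIV"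
    if "0 < x" for x
    using that w by (simp add: puiseux_val_def ray_powr c_def)
  define \<rho>n where "\<rho>n = (\<lambda>x::real. (x + real n) powr (1 / real N))"
  define \<rho>0 where "\<rho>0 = (\<lambda>x::real. x powr (1 / real N))"
  have lim_n: "filterlim \<rho>n at_top at_top"
    unfolding \<rho>n_def
    by (rule filterlim_compose[OF real_powr_at_top]) (use N in simp, real_asymp)
  have lim_0: "filterlim \<rho>0 at_top at_top"
    unfolding \<rho>0_def using N by (intro real_powr_at_top) auto
  have gt: "((\<lambda>\<rho>. g \<rho>) \<longlongrightarrow> 0) at_top" unfolding g_def by (rule neg_tail_tendsto[OF summ c0 N])
  have g_n: "((\<lambda>x. g (\<rho>n x)) \<longlongrightarrow> 0) at_top" by (rule filterlim_compose[OF gt lim_n])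
  have g_0: "((\<lambda>x. g (\<rho>0 x)) \<longlongrightarrow> 0) at_top" by (rule filterlim_compose[OF gt lim_0])
  define E where "E = (\<lambda>x. (g (\<rho>n x) - g (\<rho>0 x)) +
      (\<Sum>m<N. b (int m) * c ^ m * (of_real ((x + real n) powr (real m / real N) - x powr (real m / real N)))))"
  have Et: "(E \<longlongrightarrow> 0) at_top"
  proof -
    have "((\<lambda>x. g (\<rho>n x) - g (\<rho>0 x)) \<longlongrightarrow> 0 - 0) at_top" by (intro tendsto_diff g_n g_0)
    moreover have "((\<lambda>x. \<Sum>m<N. b (int m) * c ^ m * (of_real ((x + real n) powr (real m / real N) - x powr (real m / real N)))) \<longlongrightarrow> (\<Sum>m<N. 0)) at_top"
    proof (rule tendsto_sum)
      fix m assume "m \<in> {..<N}"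
      then have "0 \<le> real m / real N" "real m / real N < 1" using N by auto
      then have "((\<lambda>x. (x + real n) powr (real m / real N) - x powr (real m / real N)) \<longlongrightarrow> 0) at_top"
        by (intro diff_powr_tendsto) auto
      then have "((\<lambda>x. of_real ((x + real n) powr (real m / real N) - x powr (real m / real N)) :: complex) \<longlongrightarrow> of_real 0) at_top"
        by (rule tendsto_of_real)
      then show "((\<lambda>x. b (int m) * c ^ m * (of_real ((x + real n) powr (real m / real N) - x powr (real m / real N)))) \<longlongrightarrow> 0) at_top"
        by (intro tendsto_mult_right_zero) simp
    qed
    ultimately have "(E \<longlongrightarrow> (0 - 0) + (\<Sum>m<N. 0)) at_top" unfolding E_def by (intro tendsto_add)
    then show ?thesis by simp
  qed
  have F_split: "F \<rho> = (\<Sum>m<N. b (int m) * c ^ m * of_real (\<rho> ^ m)) + b (int N) * w * of_real (\<rho> ^ N)" for \<rho>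
  proof -
    have "F \<rho> = (\<Sum>m<Suc N. b (int m) * (of_real \<rho> * c) ^ m)"
      unfolding F_def by (rule sum.cong) auto
    also have "\<dots> = (\<Sum>m<N. b (int m) * (of_real \<rho> * c) ^ m) + b (int N) * (of_real \<rho> * c) ^ N"
      by simp
    also have "(\<Sum>m<N. b (int m) * (of_real \<rho> * c) ^ m) = (\<Sum>m<N. b (int m) * c ^ m * of_real (\<rho> ^ m))"
      by (rule sum.cong) (auto simp: power_mult_distrib)
    also have "b (int N) * (of_real \<rho> * c) ^ N = b (int N) * w * of_real (\<rho> ^ N)"
      by (simp add: power_mult_distrib cN)
    finally show ?thesis .
  qed
  show ?thesis
  proof (rule Lim_transform_eventually[OF Et])
    show "\<forall>\<^sub>F x in at_top. E x = puiseux_val N b (of_real (x + real n) * w) - puiseux_val N b (of_real x * w)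
             - of_nat n * w * b (int N)"
      using eventually_gt_at_top[of "max 0 (R / norm w)"]
    proof eventually_elim
      case (elim x)
      have x0: "0 < x" using elim by simp
      have xn: "0 < x + real n" using x0 by simp
      have nw: "0 < norm w" using w by simp
      have xR: "R < x * norm w" using elim nw by (simp add: field_simps)
      have xnR: "R < (x + real n) * norm w" using xR nw by (smt (verit) mult_right_mono of_nat_0_le_iff)
      have nc: "norm c ^ N = norm w" using cN by (metis norm_power)
      have bigr: "R < norm (of_real (y powr (1 / real N)) * c) ^ N" if "0 < y" "R < y * norm w" for y
      proof -
        have "norm (of_real (y powr (1 / real N)) * c) ^ N = (y powr (1 / real N)) ^ N * norm c ^ N"
          by (simp add: norm_mult power_mult_distrib)
        also have "\<dots> = y * norm w" using rpow_N[OF N that(1)] nc by simp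
        finally show ?thesis using that by simp
      qed
      have pn: "puiseux_val N b (of_real (x + real n) * w) = g (\<rho>n x) + F (\<rho>n x)"
        using pv[OF xn] decomp[OF bigr[OF xn xnR]] by (simp add: \<rho>n_def)
      have p0: "puiseux_val N b (of_real x * w) = g (\<rho>0 x) + F (\<rho>0 x)"
        using pv[OF x0] decomp[OF bigr[OF x0 xR]] by (simp add: \<rho>0_def)
      have Fn: "F (\<rho>n x) = (\<Sum>m<N. b (int m) * c ^ m * of_real ((x + real n) powr (real m / real N))) + b (int N) * w * of_real (x + real n)"
        using N xn by (simp add: F_split \<rho>n_def rpow_k[OF xn])
      have F0: "F (\<rho>0 x) = (\<Sum>m<N. b (int m) * c ^ m * of_real (x powr (real m / real N))) + b (int N) * w * of_real x"
        using N x0 by (simp add: F_split \<rho>0_def rpow_k[OF x0])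
      have "E x = (g (\<rho>n x) - g (\<rho>0 x)) +
         ((\<Sum>m<N. b (int m) * c ^ m * of_real ((x + real n) powr (real m / real N))) -
          (\<Sum>m<N. b (int m) * c ^ m * of_real (x powr (real m / real N))))"
        unfolding E_def by (simp add: sum_subtractf[symmetric] algebra_simps)
      also have "\<dots> = (g (\<rho>n x) + F (\<rho>n x)) - (g (\<rho>0 x) + F (\<rho>0 x)) - of_nat n * w * b (int N)"
        unfolding Fn F0 by (simp add: algebra_simps)
      finally show ?case using pn p0 by simp
    qed
  qed
qed




lemma norm_smult_cvec: "norm (c *s (x :: complex ^ 'n)) = norm c * norm x"
proof -
  have "norm (c *s x) = L2_set (\<lambda>i. norm c * norm (x $ i)) UNIV"
    by (simp add: norm_vec_def norm_mult)
  also have "\<dots> = norm c * L2_set (\<lambda>i. norm (x $ i)) UNIV"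
    by (rule L2_set_right_distrib[symmetric]) simp
  finally show ?thesis by (simp add: norm_vec_def)
qed

lemma lattice_mult:
  assumes "is_lattice (L :: (complex ^ 'g) set)" "lam \<in> L"
  shows "(of_int k :: complex) *s lam \<in> L"
proof -
  obtain V where V: "L = {\<Sum>v\<in>V. real_of_int (n v) *\<^sub>R v | n. True}"
    using assms(1) unfolding is_lattice_def by blast
  then obtain n where n: "lam = (\<Sum>v\<in>V. real_of_int (n v) *\<^sub>R v)" using assms(2) by blast
  have e: "(of_int k :: complex) *s x = real_of_int k *\<^sub>R x" for x :: "complex ^ 'g"
    unfolding vec_eq_iff vector_smult_component vector_scaleR_component by (simp add: scaleR_conv_of_real)
  have "(of_int k :: complex) *s lam = (\<Sum>v\<in>V. real_of_int (k * n v) *\<^sub>R v)"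
    unfolding e n by (simp add: scaleR_sum_right)
  then show ?thesis unfolding V by (intro CollectI exI[of _ "\<lambda>v. k * n v"]) simp
qed

lemma periodic_add:
  assumes "periodic_set L Z" "z \<in> Z" "l \<in> L"
  shows "z + l \<in> Z"
  using assms unfolding periodic_set_def by blast

lemma zariski_sub: "S \<subseteq> zariski_closure S"
  by (auto simp: zariski_closure_def)

lemma uncountable_ball:
  fixes A :: "'a::{metric_space, second_countable_topology} set"
  assumes "uncountable A"
  shows "\<exists>d. infinite (A \<inter> ball d 1)"
proof (rule ccontr)
  assume "\<not> ?thesis"
  then have fin: "\<And>d. finite (A \<inter> ball d 1)" by blast
  obtain D :: "'a set" where D: "countable D" "\<And>X. open X \<Longrightarrow> X \<noteq> {} \<Longrightarrow> \<exists>d\<in>D. d \<in> X"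
    using countable_dense_setE by blast
  have "A \<subseteq> (\<Union>d\<in>D. A \<inter> ball d 1)"
  proof
    fix x assume "x \<in> A"
    obtain d where "d \<in> D" "d \<in> ball x 1" using D(2)[of "ball x 1"] by auto
    then show "x \<in> (\<Union>d\<in>D. A \<inter> ball d 1)" using \<open>x \<in> A\<close> by (auto simp: dist_commute)
  qed
  moreover have "countable (\<Union>d\<in>D. A \<inter> ball d 1)"
    using D(1) fin by (intro countable_UN) (auto intro: countable_finite)
  ultimately have "countable A" by (rule countable_subset)
  then show False using assms by simp
qed

theorem proposition2p2:
  fixes L Z C :: "(complex ^ 'g) set" and \<tau> lam :: "complex ^ 'g"
    and i :: 'g and N :: nat and a :: "'g \<Rightarrow> int \<Rightarrow> complex" and R :: real and K :: nat
  assumes "is_lattice L"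
    and "periodic_set L Z"
    and "analytic_set Z"
    and "irreducible_curve C"
    and "(\<lambda>c. c + \<tau>) ` C \<subseteq> Z"
    and "is_branch C i N a R"
    and "linear_branch N a"
    and "0 < K"
    and "\<forall>c :: complex ^ 'g. \<forall>w0 w1 :: complex. \<forall>\<tau>' \<mu> :: complex ^ 'g.
           (let S = (\<lambda>x. x + \<tau>') ` Gamma_set N a R \<mu> w0 w1 \<inter> Z \<inter> ball c 1
            in infinite S \<or> K \<le> card S)
           \<longrightarrow> (\<lambda>x. x + \<tau>') ` Gamma_set N a R \<mu> w0 w1 \<subseteq> Z"
    and "lam \<in> L"
    and "\<exists>w::complex. norm (w *s branch_direction N a - lam) < 1 / (2 * real K)"
  shows "{c + \<tau> + w *s lam | c w. c \<in> C} \<subseteq> Z"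
proof -
  note lat = assms(1) and per = assms(2) and cur = assms(4) and tauC = assms(5)
    and br = assms(6) and lin = assms(7) and K0 = assms(8) and hyp = assms(9)
    and lamL = assms(10) and dirw = assms(11)
  define \<phi> where "\<phi> = branch_fun N a"
  define \<alpha> where "\<alpha> = branch_direction N a"
  have R0: "0 \<le> R" and N0: "0 < N" using br by (auto simp: is_branch_def)
  have \<phi>i: "\<phi> t $ i = t" if "R < norm t" for t using br that by (auto simp: is_branch_def \<phi>_def)
  have \<phi>C: "\<phi> t \<in> C" if "R < norm t" for t using br that by (auto simp: is_branch_def \<phi>_def)
  have ZL: "z + (of_int k :: complex) *s lam \<in> Z" if "z \<in> Z" for z k
    using periodic_add[OF per that lattice_mult[OF lat lamL]] .
  have H: "(\<lambda>x. x + \<tau>') ` Gamma_set N a R \<mu> w0 w1 \<subseteq> Z"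
    if P: "P \<subseteq> (\<lambda>x. x + \<tau>') ` Gamma_set N a R \<mu> w0 w1 \<inter> Z \<inter> ball c 1"
      and Pc: "infinite P \<or> K \<le> card P" for P c w0 w1 \<tau>' \<mu>
  proof -
    define S where "S = (\<lambda>x. x + \<tau>') ` Gamma_set N a R \<mu> w0 w1 \<inter> Z \<inter> ball c 1"
    have "infinite S \<or> K \<le> card S"
    proof (cases "finite S")
      case True
      have PS: "P \<subseteq> S" using P by (simp add: S_def)
      then have "finite P" "card P \<le> card S" using True by (auto intro: finite_subset card_mono)
      then show ?thesis using Pc by auto
    qed simp
    then show ?thesis using hyp unfolding Let_def S_def by blast
  qed
  have Gsup: "{\<phi> (w0 + \<kappa> * w1) - \<kappa> *s \<mu> | \<kappa>. R < norm (w0 + \<kappa> * w1)} \<subseteq> Gamma_set N a R \<mu> w0 w1"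
    for w0 w1 \<mu> unfolding Gamma_set_def \<phi>_def by (rule zariski_sub)
  have line: "\<forall>\<kappa>. p + \<kappa> *s v \<in> Z"
    if P: "P \<subseteq> {p + \<kappa> *s v | \<kappa>. True} \<inter> Z \<inter> ball c 1" and Pc: "infinite P \<or> K \<le> card P"
    for P p v c
  proof -
    define w0 where "w0 = (of_real (R + 1) :: complex)"
    have w0R: "R < norm (w0 + \<kappa> * 0)" for \<kappa> using R0 by (simp add: w0_def)
    define \<tau>' where "\<tau>' = p - \<phi> w0"
    have sub: "{p + \<kappa> *s v | \<kappa>. True} \<subseteq> (\<lambda>x. x + \<tau>') ` Gamma_set N a R (- v) w0 0"
    proof
      fix y assume "y \<in> {p + \<kappa> *s v | \<kappa>. True}"
      then obtain \<kappa> where y: "y = p + \<kappa> *s v" by blast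
      have "\<phi> (w0 + \<kappa> * 0) - \<kappa> *s (- v) \<in> Gamma_set N a R (- v) w0 0"
        using Gsup[of w0 0 "- v"] w0R[of \<kappa>] by blast
      moreover have "y = (\<phi> (w0 + \<kappa> * 0) - \<kappa> *s (- v)) + \<tau>'"
        by (simp add: y \<tau>'_def vector_smult_rneg)
      ultimately show "y \<in> (\<lambda>x. x + \<tau>') ` Gamma_set N a R (- v) w0 0" by blast
    qed
    have "(\<lambda>x. x + \<tau>') ` Gamma_set N a R (- v) w0 0 \<subseteq> Z"
      by (rule H[of P]) (use P sub Pc in auto)
    then show ?thesis using sub by blast
  qed
  show ?thesis
  proof (cases "lam = 0")
    case True
    then show ?thesis using tauC by auto
  next
    case lam0: False
    obtain w where w: "norm (w *s \<alpha> - lam) < 1 / (2 * real K)" "w \<noteq> 0" "w \<noteq> lam $ i"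
    proof -
      obtain w0 where w0: "norm (w0 *s \<alpha> - lam) < 1 / (2 * real K)" using dirw \<alpha>_def by blast
      define d where "d = (1 / (2 * real K) - norm (w0 *s \<alpha> - lam)) / (norm \<alpha> + 1)"
      have a1: "0 < norm \<alpha> + 1" by (simp add: add_nonneg_pos)
      have d0: "0 < d" unfolding d_def using w0 a1 by (intro divide_pos_pos) auto
      define W where "W = (\<lambda>r::real. w0 + of_real r) ` {0<..<d}"
      have "inj_on (\<lambda>r::real. w0 + of_real r) {0<..<d}" by (auto simp: inj_on_def)
      then have "infinite W" using d0 by (simp add: W_def finite_image_iff)
      then have "infinite (W - {0, lam $ i})" by (rule Diff_infinite_finite[rotated]) simp
      then obtain w' where w': "w' \<in> W" "w' \<notin> {0, lam $ i}" using infinite_imp_nonempty by blast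
      then obtain r where r: "0 < r" "r < d" "w' = w0 + of_real r" by (auto simp: W_def)
      have "norm (w' *s \<alpha> - lam) = norm ((w0 *s \<alpha> - lam) + of_real r *s \<alpha>)"
        by (simp add: r(3) vector_sadd_rdistrib algebra_simps)
      also have "\<dots> \<le> norm (w0 *s \<alpha> - lam) + r * norm \<alpha>"
        using norm_triangle_ineq[of "w0 *s \<alpha> - lam" "of_real r *s \<alpha>"] r(1)
        by (simp add: norm_smult_cvec)
      also have "\<dots> < 1 / (2 * real K)"
      proof -
        have "r * norm \<alpha> \<le> d * norm \<alpha>" using r by (intro mult_right_mono) auto
        also have "\<dots> < d * (norm \<alpha> + 1)" using d0 by simp
        also have "\<dots> = 1 / (2 * real K) - norm (w0 *s \<alpha> - lam)" unfolding d_def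
          using a1 by simp
        finally show ?thesis by simp
      qed
      finally show ?thesis using that w' by blast
    qed
    have comp_lim: "((\<lambda>x. \<phi> (of_real (x + real n) * w) - \<phi> (of_real x * w) - (of_nat n * w) *s \<alpha>) \<longlongrightarrow> 0) at_top"
      for n :: nat
    proof (rule vec_tendstoI)
      fix j
      have summ: "\<forall>s. R < norm s ^ N \<longrightarrow> (\<lambda>k. a j k * s powi k) summable_on UNIV"
        using br by (simp add: is_branch_def)
      have bN: "\<forall>k. int N < k \<longrightarrow> a j k = 0" using lin by (simp add: linear_branch_def)
      show "((\<lambda>x. (\<phi> (of_real (x + real n) * w) - \<phi> (of_real x * w) - (of_nat n * w) *s \<alpha>) $ j) \<longlongrightarrow> 0 $ j) at_top"
        using ray_diff_tendsto[OF summ w(2) N0 bN, of n]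
        by (simp add: \<phi>_def \<alpha>_def branch_fun_def branch_direction_def)
    qed
    have ev1: "\<forall>\<^sub>F x in at_top. \<forall>n\<in>{..<K}.
        norm (\<phi> (of_real (x + real n) * w) - \<phi> (of_real x * w) - (of_nat n * w) *s \<alpha>) < 1 / 2"
    proof (rule eventually_ball_finite)
      show "\<forall>n\<in>{..<K}. \<forall>\<^sub>F x in at_top.
        norm (\<phi> (of_real (x + real n) * w) - \<phi> (of_real x * w) - (of_nat n * w) *s \<alpha>) < 1 / 2"
      proof
        fix n :: nat
        have "\<forall>e>0. \<forall>\<^sub>F x in at_top. dist (\<phi> (of_real (x + real n) * w) - \<phi> (of_real x * w) - (of_nat n * w) *s \<alpha>) 0 < e"
          using comp_lim[of n] unfolding tendsto_iff .
        from this[rule_format, of "1/2"] show "\<forall>\<^sub>F x in at_top.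
          norm (\<phi> (of_real (x + real n) * w) - \<phi> (of_real x * w) - (of_nat n * w) *s \<alpha>) < 1 / 2"
          by (auto simp: dist_norm)
      qed
    qed simp
    have ev2: "\<forall>\<^sub>F x in at_top. R / norm w < x \<and> 0 < x"
      by (intro eventually_conj eventually_gt_at_top)
    obtain x0 where x0: "\<And>x. x0 \<le> x \<Longrightarrow> (\<forall>n\<in>{..<K}.
        norm (\<phi> (of_real (x + real n) * w) - \<phi> (of_real x * w) - (of_nat n * w) *s \<alpha>) < 1 / 2)
        \<and> R / norm w < x \<and> 0 < x"
      using eventually_conj[OF ev1 ev2] unfolding eventually_at_top_linorder by blast
    have nw: "0 < norm w" using w(2) by simp
    have GZ: "(\<lambda>y. y + \<tau>) ` Gamma_set N a R lam (of_real x * w) w \<subseteq> Z" if xx: "x0 \<le> x" for x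
    proof -
      have xp: "\<forall>n\<in>{..<K}. norm (\<phi> (of_real (x + real n) * w) - \<phi> (of_real x * w) - (of_nat n * w) *s \<alpha>) < 1 / 2"
        "R / norm w < x" "0 < x" using x0[OF xx] by auto
      have xR: "R < x * norm w" using xp(2) nw by (simp add: field_simps)
      define q where "q = (\<lambda>n::nat. \<phi> (of_real (x + real n) * w) - of_nat n *s lam + \<tau>)"
      have tR: "R < norm (of_real (x + real n) * w)" for n :: nat
      proof -
        have "x * norm w \<le> (x + real n) * norm w" using nw by (intro mult_right_mono) auto
        moreover have "norm (of_real (x + real n) * w) = (x + real n) * norm w"
          unfolding norm_mult norm_of_real using xp(3) by simp
        ultimately show ?thesis using xR by linarith
      qed
      have qG: "q n \<in> (\<lambda>y. y + \<tau>) ` Gamma_set N a R lam (of_real x * w) w" for n :: nat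
      proof -
        have e: "of_real x * w + of_nat n * w = of_real (x + real n) * w" by (simp add: distrib_right)
        have mem: "\<phi> (of_real x * w + of_nat n * w) - of_nat n *s lam \<in>
            {\<phi> (of_real x * w + \<kappa> * w) - \<kappa> *s lam | \<kappa>. R < norm (of_real x * w + \<kappa> * w)}"
          using tR[of n] unfolding e[symmetric] by (intro CollectI exI[of _ "of_nat n"]) simp
        have "\<phi> (of_real (x + real n) * w) - of_nat n *s lam \<in> Gamma_set N a R lam (of_real x * w) w"
          using subsetD[OF Gsup mem] unfolding e .
        then show ?thesis unfolding q_def by (rule rev_image_eqI) simp
      qed
      have qZ: "q n \<in> Z" for n :: nat
      proof -
        have "\<phi> (of_real (x + real n) * w) + \<tau> \<in> Z" using tauC \<phi>C[OF tR[of n]] by blast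
        moreover have "q n = (\<phi> (of_real (x + real n) * w) + \<tau>) + (of_int (- int n) :: complex) *s lam"
          unfolding q_def by (simp add: vector_smult_lneg)
        ultimately show ?thesis using ZL by metis
      qed
      have qB: "q n \<in> ball (q 0) 1" if "n \<in> {..<K}" for n
      proof -
        have "q n - q 0 = (\<phi> (of_real (x + real n) * w) - \<phi> (of_real x * w) - (of_nat n * w) *s \<alpha>)
            + of_nat n *s (w *s \<alpha> - lam)"
          by (simp add: q_def vector_ssub_ldistrib vector_smult_assoc algebra_simps)
        then have "norm (q n - q 0) \<le> norm (\<phi> (of_real (x + real n) * w) - \<phi> (of_real x * w) - (of_nat n * w) *s \<alpha>)
            + real n * norm (w *s \<alpha> - lam)"
          by (metis norm_triangle_ineq norm_smult_cvec norm_of_nat)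
        also have "\<dots> < 1 / 2 + 1 / 2"
        proof (rule add_less_le_mono)
          show "norm (\<phi> (of_real (x + real n) * w) - \<phi> (of_real x * w) - (of_nat n * w) *s \<alpha>) < 1 / 2"
            using xp(1) that by blast
          have "real n * norm (w *s \<alpha> - lam) \<le> real K * norm (w *s \<alpha> - lam)"
            using that by (intro mult_right_mono) auto
          also have "\<dots> \<le> real K * (1 / (2 * real K))" using w(1) by (intro mult_left_mono) auto
          also have "\<dots> = 1 / 2" using K0 by simp
          finally show "real n * norm (w *s \<alpha> - lam) \<le> 1 / 2" .
        qed
        finally show ?thesis by (simp add: dist_norm norm_minus_commute)
      qed
      have qinj: "inj_on q {..<K}"
      proof
        fix n m assume "n \<in> {..<K}" "m \<in> {..<K}" "q n = q m"
        then have "q n $ i = q m $ i" by simp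
        then have "(of_real x + of_nat n) * w - of_nat n * lam $ i = (of_real x + of_nat m) * w - of_nat m * lam $ i"
          using \<phi>i[OF tR[of n]] \<phi>i[OF tR[of m]] by (simp add: q_def)
        then have "(of_nat n - of_nat m) * (w - lam $ i) = 0" by (simp add: algebra_simps)
        then show "n = m" using w(3) by simp
      qed
      have "card (q ` {..<K}) = K" using qinj by (simp add: card_image)
      then show ?thesis
        by (intro H[where P="q ` {..<K}" and c="q 0"]) (use qG qZ qB in auto)
    qed
    have nl: "0 < norm lam" using lam0 by simp
    have lineZ: "\<phi> t + \<tau> + \<kappa> *s lam \<in> Z" if tR: "R < norm t" for t \<kappa>
    proof -
      define x1 where "x1 = max x0 0"
      define d where "d = 1 / (2 * norm lam)"
      have d0: "0 < d" using nl by (simp add: d_def)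
      define p where "p = \<phi> t + \<tau>"
      define f where "f = (\<lambda>x::real. p + (of_real x - t / w) *s lam)"
      have fZ: "f x \<in> Z" if "x0 \<le> x" for x
      proof -
        define k where "k = t / w - of_real x"
        have e: "of_real x * w + k * w = t" using w(2) by (simp add: k_def field_simps)
        have mem: "\<phi> (of_real x * w + k * w) - k *s lam \<in>
            {\<phi> (of_real x * w + \<kappa> * w) - \<kappa> *s lam | \<kappa>. R < norm (of_real x * w + \<kappa> * w)}"
          using tR unfolding e[symmetric] by blast
        have "\<phi> t - k *s lam \<in> Gamma_set N a R lam (of_real x * w) w"
          using subsetD[OF Gsup mem] unfolding e .
        then have "\<phi> t - k *s lam + \<tau> \<in> Z" using GZ[OF that] by blast
        moreover have "\<phi> t - k *s lam + \<tau> = f x"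
          unfolding f_def p_def k_def by (simp add: vector_sub_rdistrib algebra_simps)
        ultimately show ?thesis by simp
      qed
      have finj: "inj_on f {x1..<x1 + d}"
      proof
        fix x y assume "f x = f y"
        then have "(of_real x - of_real y :: complex) *s lam = 0"
          by (simp add: f_def vector_sub_rdistrib algebra_simps)
        then show "x = y" using lam0 by simp
      qed
      have inf: "infinite (f ` {x1..<x1 + d})"
        using finj d0 by (simp add: finite_image_iff)
      have sub: "f ` {x1..<x1 + d} \<subseteq> {p + \<kappa> *s lam | \<kappa>. True} \<inter> Z \<inter> ball (f x1) 1"
      proof
        fix y assume "y \<in> f ` {x1..<x1 + d}"
        then obtain x where x: "x1 \<le> x" "x < x1 + d" "y = f x" by auto
        have "y \<in> Z" using fZ[of x] x by (simp add: x1_def)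
        moreover have "y \<in> {p + \<kappa> *s lam | \<kappa>. True}" using x(3) unfolding f_def by blast
        moreover have "dist (f x1) y < 1"
        proof -
          have "f x1 - y = (of_real (x1 - x) :: complex) *s lam"
            by (simp add: x(3) f_def vector_sub_rdistrib algebra_simps)
          then have "dist (f x1) y = norm ((of_real (x1 - x) :: complex) *s lam)"
            by (simp only: dist_norm)
          also have "\<dots> = \<bar>x1 - x\<bar> * norm lam" by (simp only: norm_smult_cvec norm_of_real)
          also have "\<dots> \<le> d * norm lam" using x by (intro mult_right_mono) auto
          also have "\<dots> < 1" using nl by (simp add: d_def)
          finally show ?thesis .
        qed
        ultimately show "y \<in> {p + \<kappa> *s lam | \<kappa>. True} \<inter> Z \<inter> ball (f x1) 1" by simp
      qed
      have "\<forall>\<kappa>. p + \<kappa> *s lam \<in> Z" by (rule line[OF sub]) (use inf in simp)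
      then show ?thesis by (simp add: p_def)
    qed
    define U where "U = {t::complex. R < norm t}"
    have \<phi>inj: "inj_on (\<lambda>t. \<phi> t + v) U" for v
    proof
      fix s t assume "s \<in> U" "t \<in> U" "\<phi> s + v = \<phi> t + v"
      then have "\<phi> s $ i = \<phi> t $ i" by simp
      then show "s = t" using \<phi>i \<open>s \<in> U\<close> \<open>t \<in> U\<close> by (simp add: U_def)
    qed
    have U_unc: "uncountable U"
    proof
      assume "countable U"
      moreover have "of_real ` {R<..<R+1} \<subseteq> U" by (auto simp: U_def)
      ultimately have "countable (of_real ` {R<..<R+1} :: complex set)" by (rule countable_subset[rotated])
      then have "countable {R<..<R+1}" by (rule countable_image_inj_on) (auto simp: inj_on_def)
      then show False using uncountable_open_interval[of R "R + 1"] by simp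
    qed
    have G_eq: "{\<phi> (0 + \<kappa> * 1) - \<kappa> *s 0 | \<kappa>. R < norm (0 + \<kappa> * 1)} = \<phi> ` U"
      by (auto simp: U_def)
    have CG: "C \<subseteq> Gamma_set N a R 0 0 1"
    proof -
      have "\<phi> ` U \<subseteq> C" using \<phi>C by (auto simp: U_def)
      moreover have "infinite (\<phi> ` U)"
      proof
        assume "finite (\<phi> ` U)"
        moreover have "inj_on \<phi> U" using \<phi>inj[of 0] by simp
        ultimately have "finite U" by (simp add: finite_image_iff)
        then show False using U_unc countable_finite by blast
      qed
      ultimately have "C \<subseteq> zariski_closure (\<phi> ` U)" by (rule curve_dense[OF cur])
      then show ?thesis unfolding Gamma_set_def \<phi>_def[symmetric] G_eq .
    qed
    show ?thesis
    proof
      fix y assume "y \<in> {c + \<tau> + w *s lam | c w. c \<in> C}"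
      then obtain c \<kappa> where y: "y = c + \<tau> + \<kappa> *s lam" "c \<in> C" by blast
      define \<tau>' where "\<tau>' = \<tau> + \<kappa> *s lam"
      define A where "A = (\<lambda>t. \<phi> t + \<tau>') ` U"
      have AZ: "A \<subseteq> Z" using lineZ by (auto simp: A_def U_def \<tau>'_def add.assoc)
      have AG: "A \<subseteq> (\<lambda>x. x + \<tau>') ` Gamma_set N a R 0 0 1"
      proof -
        have "\<phi> ` U \<subseteq> Gamma_set N a R 0 0 1"
          unfolding Gamma_set_def \<phi>_def[symmetric] G_eq by (rule zariski_sub)
        then show ?thesis by (auto simp: A_def)
      qed
      have "uncountable A"
      proof
        assume "countable A"
        then have "countable U" unfolding A_def by (rule countable_image_inj_on) (rule \<phi>inj)
        then show False using U_unc by simp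
      qed
      then obtain d where d: "infinite (A \<inter> ball d 1)" using uncountable_ball by blast
      have "(\<lambda>x. x + \<tau>') ` Gamma_set N a R 0 0 1 \<subseteq> Z"
        by (rule H[where P="A \<inter> ball d 1" and c=d]) (use AZ AG d in auto)
      then have "c + \<tau>' \<in> Z" using CG y(2) by blast
      then show "y \<in> Z" by (simp add: y(1) \<tau>'_def add.assoc)
    qed
  qed
qed


end
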